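(* The sequence $$\left\{1-\frac{1}{\log(n+2)}\log\left(\frac{(n+2)\log(n+2)-\log4}{n}\right)\right\}_{n\in\mathbb{N}}$$ is strictly increasing.
   Context: $\mathbb{N}=\{1,2,3,\dots\}$. *)

theory Defs
  imports Complex_Main
begin

definition seq8 :: "nat \<Rightarrow> real" where
  "seq8 n = 1 - (1 / ln (real n + 2)) *
     ln (((real n + 2) * ln (real n + 2) - ln 4) / real n)"

end

theory Submission imports Defs "HOL-Analysis.Complex_Transcendental" begin

lemma ln_lower_rat:
  fixes g :: real assumes "1 \<le> g" shows "2*(g-1)/(g+1) \<le> ln g"
proof -
  let ?h = "\<lambda>t::real. ln t - 2*(t-1)/(t+1)"
  have "?h 1 \<le> ?h g"
  proof (cases "g = 1")
    case False
    hence "1 < g" using assms by simp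
    show ?thesis
    proof (rule DERIV_nonneg_imp_nondecreasing[OF \<open>1 \<le> g\<close>])
      fix t :: real assume t: "1 \<le> t" "t \<le> g"
      have "(?h has_real_derivative (1/t - 4/(t+1)^2)) (at t)"
        using t by (auto intro!: derivative_eq_intros simp: field_simps power2_eq_square)
      moreover have "1/t - 4/(t+1)^2 \<ge> 0"
      proof -
        have "(t-1)^2/(t*(t+1)^2) \<ge> 0" using t by simp
        moreover have "1/t - 4/(t+1)^2 = (t-1)^2/(t*(t+1)^2)" using t
          by (simp add: divide_simps) algebra
        ultimately show ?thesis by simp
      qed
      ultimately show "\<exists>y. (?h has_real_derivative y) (at t) \<and> 0 \<le> y" by blast
    qed
  qed simp
  thus ?thesis by simp
qed

lemma exp_taylor_lb:
  fixes x :: real assumes "0 \<le> x"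
  shows "(\<Sum>n<N. x^n / fact n) \<le> exp x"
proof -
  have "(\<Sum>n<N. x^n /\<^sub>R fact n) \<le> (\<Sum>n. x^n /\<^sub>R fact n)"
    using assms by (intro sum_le_suminf summable_exp_generic) auto
  thus ?thesis by (simp add: exp_def divide_inverse mult.commute)
qed

lemma ln4_le: "ln (4::real) \<le> 7/5"
proof -
  have "(2::real) \<le> (\<Sum>n<4. (7/10)^n / fact n)"
    by (simp add: eval_nat_numeral fact_numeral)
  also have "\<dots> \<le> exp (7/10)" by (rule exp_taylor_lb) simp
  finally have "(2::real)*2 \<le> exp (7/10) * exp (7/10)" by (intro mult_mono) auto
  also have "\<dots> = exp (7/5)" by (simp flip: exp_add)
  finally have "4 \<le> exp (7/5::real)" by simp
  hence "ln 4 \<le> ln (exp (7/5::real))" by (subst ln_le_cancel_iff) auto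
  thus ?thesis by simp
qed

lemma ln_series_lb:
  fixes y :: real assumes "1 \<le> y"
  shows "(\<Sum>n<N. 2*((y - 1) / (y + 1)) ^ (2*n+1) / of_nat (2*n+1)) \<le> ln y"
proof -
  have s: "(\<lambda>n. (2*((y - 1) / (y + 1)) ^ (2*n+1) / of_nat (2*n+1))) sums ln y"
    using assms by (intro ln_series_quadratic) simp
  have "(\<Sum>n<N. 2*((y - 1) / (y + 1)) ^ (2*n+1) / of_nat (2*n+1))
        \<le> (\<Sum>n. 2*((y - 1) / (y + 1)) ^ (2*n+1) / of_nat (2*n+1))"
    using s assms by (intro sum_le_suminf) (auto simp: sums_iff)
  thus ?thesis using s by (simp add: sums_iff)
qed

lemma ln2_lb: "(6931/10000::real) \<le> ln 2"
proof -
  have "(6931/10000::real) \<le> (\<Sum>n<4. 2*(((2::real) - 1) / (2 + 1)) ^ (2*n+1) / of_nat (2*n+1))"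
    by (simp add: eval_nat_numeral)
  also have "\<dots> \<le> ln 2" by (rule ln_series_lb) simp
  finally show ?thesis .
qed

lemma ln_lb_gen:
  fixes a x y r :: real and k :: nat
  assumes "a = 2^k * y" "1 \<le> y" "a \<le> x"
    "r \<le> real k * (6931/10000) + (\<Sum>n<4. 2*((y - 1) / (y + 1)) ^ (2*n+1) / of_nat (2*n+1))"
  shows "r \<le> ln x"
proof -
  have y0: "y > 0" using assms by simp
  have "ln a = real k * ln 2 + ln y" using assms(1) y0 by (simp add: ln_mult ln_realpow)
  moreover have "real k * (6931/10000) \<le> real k * ln 2" using ln2_lb by (intro mult_left_mono) auto
  moreover have "(\<Sum>n<4. 2*((y - 1) / (y + 1)) ^ (2*n+1) / of_nat (2*n+1)) \<le> ln y"
    using assms by (intro ln_series_lb)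
  moreover have "ln a \<le> ln x"
  proof -
    have a0: "a > 0" using assms(1) y0 by simp
    thus ?thesis using assms(3) by simp
  qed
  ultimately show ?thesis using assms(4) by linarith
qed

lemma box:
  fixes x L c a b r C :: real
  assumes ax: "a \<le> x" and xb: "x \<le> b" and a2: "2 < a" and rL: "r \<le> L" and c0: "0 \<le> c"
    and cC: "c \<le> C" and Car: "C < a*r" and C2r: "C \<le> 2*r"
    and g1: "1 < r + (2*r - C)/(b-2)"
    and key: "(1 + C/(a*r - C)) * (1 - (2*r-C)/(b-2))
        < 2*((r + (2*r - C)/(b-2)) - 1)/((r + (2*r - C)/(b-2)) + 1)"
  shows "x*L*(x-2*L-2+c) < (x*L - c)*(x-2)*ln((x*L-c)/(x-2))"
proof -
  have "0 < a*r" using Car c0 cC by linarith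
  hence r0: "r > 0" using a2 by (simp add: zero_less_mult_iff)
  have L0: "L > 0" using r0 rL by simp
  have "a*r \<le> x*L" using ax rL r0 a2 by (intro mult_mono) auto
  hence N: "a*r - C \<le> x*L - c" using cC by simp
  have Npos: "x*L - c > 0" using N Car by simp
  have Dpos: "x - 2 > 0" using ax a2 by simp
  define d where "d = (2*L - c)/(x-2)"
  define \<delta> where "\<delta> = (2*r - C)/(b-2)"
  have "(2*r - C)/(b-2) \<le> (2*L-c)/(b-2)" using rL cC xb Dpos by (intro divide_right_mono) auto
  also have "\<dots> \<le> (2*L-c)/(x-2)" using rL cC xb Dpos C2r by (intro divide_left_mono) auto
  finally have d\<delta>: "\<delta> \<le> d" unfolding d_def \<delta>_def .
  have \<delta>0: "0 \<le> \<delta>" unfolding \<delta>_def using C2r xb Dpos by simp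
  define g where "g = (x*L-c)/(x-2)"
  have gLd: "g = L + d" unfolding g_def d_def using Dpos by (simp add: field_simps)
  have g\<gamma>: "r + \<delta> \<le> g" using gLd d\<delta> rL by simp
  have g1': "1 \<le> g" using g\<gamma> g1 unfolding \<delta>_def by simp
  have "2*((r + \<delta>) - 1)/((r + \<delta>) + 1) \<le> 2*(g-1)/(g+1)"
  proof -
    have "2*((r + \<delta>) - 1)/((r + \<delta>) + 1) = 2 - 4/((r + \<delta>) + 1)"
      using r0 \<delta>0 by (simp add: field_simps)
    also have "\<dots> \<le> 2 - 4/(g+1)" using g\<gamma> r0 \<delta>0 by (simp add: frac_le)
    also have "\<dots> = 2*(g-1)/(g+1)" using g1' by (simp add: field_simps)
    finally show ?thesis .
  qed
  also have "\<dots> \<le> ln g" using g1' by (rule ln_lower_rat)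
  finally have lng: "2*((r + \<delta>) - 1)/((r + \<delta>) + 1) \<le> ln g" .
  have lng0: "ln g > 0" using lng g1 unfolding \<delta>_def
    by (smt (verit) divide_pos_pos)
  have LHS: "x*L*(x-2*L-2+c) = (x*L - c)*(x-2)*((1 + c/(x*L-c))*(1-d))"
  proof -
    have e1: "(x*L - c)*(1 + c/(x*L-c)) = x*L" using Npos by (simp add: field_simps)
    have e2: "(x-2)*(1-d) = x-2*L-2+c" unfolding d_def using Dpos by (simp add: field_simps)
    have "(x*L - c)*(x-2)*((1 + c/(x*L-c))*(1-d)) = ((x*L - c)*(1 + c/(x*L-c)))*((x-2)*(1-d))"
      by (simp only: mult_ac)
    thus ?thesis using e1 e2 by simp
  qed
  show ?thesis
  proof (cases "1 - d \<le> 0")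
    case True
    have "(1 + c/(x*L-c))*(1-d) \<le> 0" using True Npos c0
      by (intro mult_nonneg_nonpos) auto
    also have "0 < ln g" by (fact lng0)
    finally show ?thesis unfolding LHS g_def using Npos Dpos
      by (intro mult_strict_left_mono) auto
  next
    case False
    have "c/(x*L-c) \<le> C/(a*r-C)" using Npos N c0 cC Car by (intro frac_le) auto
    hence "(1 + c/(x*L-c))*(1-d) \<le> (1 + C/(a*r - C)) * (1 - \<delta>)"
      using False d\<delta> Npos c0 Car c0 cC by (intro mult_mono) auto
    also have "\<dots> < 2*((r + \<delta>) - 1)/((r + \<delta>) + 1)" using key unfolding \<delta>_def .
    also have "\<dots> \<le> ln g" by (fact lng)
    finally show ?thesis unfolding LHS g_def using Npos Dpos
      by (intro mult_strict_left_mono) auto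
  qed
qed

lemma tail:
  fixes x L c :: real
  assumes L3: "3 \<le> L" and x2: "2 < x" and c0: "0 \<le> c" and cC: "c \<le> 7/5"
  shows "x*L*(x-2*L-2+c) < (x*L - c)*(x-2)*ln((x*L-c)/(x-2))"
proof -
  have "3*2 \<le> L*x" using L3 x2 by (intro mult_mono) auto
  hence Npos: "x*L - c > 0" using cC by (simp add: mult.commute)
  have Dpos: "x - 2 > 0" using x2 by simp
  have gL: "(x*L-c)/(x-2) = L + (2*L-c)/(x-2)" using Dpos by (simp add: field_simps)
  have "(2*L-c)/(x-2) \<ge> 0" using L3 cC Dpos by simp
  hence g3: "3 \<le> (x*L-c)/(x-2)" using gL L3 by linarith
  have aux: "\<And>G::real. 3 \<le> G \<Longrightarrow> 1 \<le> 2*(G-1)/(G+1)" by (simp add: field_simps)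
  have "1 \<le> 2*((x*L-c)/(x-2)-1)/((x*L-c)/(x-2)+1)" using aux[OF g3] .
  also have "\<dots> \<le> ln ((x*L-c)/(x-2))" using g3 by (intro ln_lower_rat) simp
  finally have lg: "1 \<le> ln ((x*L-c)/(x-2))" .
  have q: "2*L*L - c*L - c > 0"
  proof -
    have "c*L \<le> 7/5*L" using cC L3 by (intro mult_right_mono) auto
    moreover have "3*L \<le> L*L" using L3 by (intro mult_right_mono) auto
    ultimately show ?thesis using cC L3 by linarith
  qed
  have "(x*L - c)*(x-2) - x*L*(x-2*L-2+c) = x*(2*L*L - c*L - c) + 2*c"
    by (simp add: algebra_simps)
  moreover have "x*(2*L*L - c*L - c) > 0" using q x2 by simp
  ultimately have "x*L*(x-2*L-2+c) < (x*L - c)*(x-2)" using c0 by linarith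
  also have "\<dots> \<le> (x*L - c)*(x-2)*ln((x*L-c)/(x-2))"
  proof -
    have "0 < (x*L - c)*(x-2)" using Npos Dpos by simp
    thus ?thesis using lg mult_left_mono[OF lg, of "(x*L - c)*(x-2)"] by simp
  qed
  finally show ?thesis .
qed

lemma core:
  fixes x :: real assumes x3: "3 \<le> x"
  shows "x*ln x*(x-2*ln x-2+ln 4) < (x*ln x - ln 4)*(x-2)*ln((x*ln x-ln 4)/(x-2))"
proof -
  have c0: "0 \<le> ln (4::real)" by simp
  have cC: "ln (4::real) \<le> 7/5" by (rule ln4_le)
  have I0: "?thesis" if h: "3 \<le> x" "x \<le> 25/8"
  proof -
    have r: "549/500 \<le> ln x" by (rule ln_lb_gen[of "3" 1 "3/2"]) (use h in \<open>simp_all add: eval_nat_numeral\<close>)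
    show ?thesis by (rule box[of "3" x "25/8" "549/500" "ln x" "ln 4" "7/5"]) (use h r c0 cC in simp_all)
  qed
  have I1: "?thesis" if h: "25/8 \<le> x" "x \<le> 13/4"
  proof -
    have r: "1139/1000 \<le> ln x" by (rule ln_lb_gen[of "25/8" 1 "25/16"]) (use h in \<open>simp_all add: eval_nat_numeral\<close>)
    show ?thesis by (rule box[of "25/8" x "13/4" "1139/1000" "ln x" "ln 4" "7/5"]) (use h r c0 cC in simp_all)
  qed
  have I2: "?thesis" if h: "13/4 \<le> x" "x \<le> 7/2"
  proof -
    have r: "589/500 \<le> ln x" by (rule ln_lb_gen[of "13/4" 1 "13/8"]) (use h in \<open>simp_all add: eval_nat_numeral\<close>)
    show ?thesis by (rule box[of "13/4" x "7/2" "589/500" "ln x" "ln 4" "7/5"]) (use h r c0 cC in simp_all)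
  qed
  have I3: "?thesis" if h: "7/2 \<le> x" "x \<le> 15/4"
  proof -
    have r: "313/250 \<le> ln x" by (rule ln_lb_gen[of "7/2" 1 "7/4"]) (use h in \<open>simp_all add: eval_nat_numeral\<close>)
    show ?thesis by (rule box[of "7/2" x "15/4" "313/250" "ln x" "ln 4" "7/5"]) (use h r c0 cC in simp_all)
  qed
  have I4: "?thesis" if h: "15/4 \<le> x" "x \<le> 33/8"
  proof -
    have r: "1321/1000 \<le> ln x" by (rule ln_lb_gen[of "15/4" 1 "15/8"]) (use h in \<open>simp_all add: eval_nat_numeral\<close>)
    show ?thesis by (rule box[of "15/4" x "33/8" "1321/1000" "ln x" "ln 4" "7/5"]) (use h r c0 cC in simp_all)
  qed
  have I5: "?thesis" if h: "33/8 \<le> x" "x \<le> 19/4"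
  proof -
    have r: "177/125 \<le> ln x" by (rule ln_lb_gen[of "33/8" 2 "33/32"]) (use h in \<open>simp_all add: eval_nat_numeral\<close>)
    show ?thesis by (rule box[of "33/8" x "19/4" "177/125" "ln x" "ln 4" "7/5"]) (use h r c0 cC in simp_all)
  qed
  have I6: "?thesis" if h: "19/4 \<le> x" "x \<le> 23/4"
  proof -
    have r: "779/500 \<le> ln x" by (rule ln_lb_gen[of "19/4" 2 "19/16"]) (use h in \<open>simp_all add: eval_nat_numeral\<close>)
    show ?thesis by (rule box[of "19/4" x "23/4" "779/500" "ln x" "ln 4" "7/5"]) (use h r c0 cC in simp_all)
  qed
  have I7: "?thesis" if h: "23/4 \<le> x" "x \<le> 15/2"
  proof -
    have r: "1749/1000 \<le> ln x" by (rule ln_lb_gen[of "23/4" 2 "23/16"]) (use h in \<open>simp_all add: eval_nat_numeral\<close>)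
    show ?thesis by (rule box[of "23/4" x "15/2" "1749/1000" "ln x" "ln 4" "7/5"]) (use h r c0 cC in simp_all)
  qed
  have I8: "?thesis" if h: "15/2 \<le> x" "x \<le> 89/8"
  proof -
    have r: "1007/500 \<le> ln x" by (rule ln_lb_gen[of "15/2" 2 "15/8"]) (use h in \<open>simp_all add: eval_nat_numeral\<close>)
    show ?thesis by (rule box[of "15/2" x "89/8" "1007/500" "ln x" "ln 4" "7/5"]) (use h r c0 cC in simp_all)
  qed
  have I9: "?thesis" if h: "89/8 \<le> x" "x \<le> 21"
  proof -
    have r: "2409/1000 \<le> ln x" by (rule ln_lb_gen[of "89/8" 3 "89/64"]) (use h in \<open>simp_all add: eval_nat_numeral\<close>)
    show ?thesis by (rule box[of "89/8" x "21" "2409/1000" "ln x" "ln 4" "7/5"]) (use h r c0 cC in simp_all)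
  qed
  have I10: "?thesis" if h: "21 \<le> x"
  proof -
    have r: "3 \<le> ln x" by (rule ln_lb_gen[of 21 4 "21/16"]) (use h in \<open>simp_all add: eval_nat_numeral\<close>)
    show ?thesis by (rule tail) (use r c0 cC h in auto)
  qed
  have F0: "3 \<le> x" by (fact x3)
  show ?thesis
  proof (cases "x \<le> 25/8")
    case True
    show ?thesis by (rule I0) (use True F0 in simp_all)
  next
    case F1: False
    show ?thesis
    proof (cases "x \<le> 13/4")
      case True
      show ?thesis by (rule I1) (use True F1 in simp_all)
    next
      case F2: False
      show ?thesis
      proof (cases "x \<le> 7/2")
        case True
        show ?thesis by (rule I2) (use True F2 in simp_all)
      next
        case F3: False
        show ?thesis
        proof (cases "x \<le> 15/4")
          case True
          show ?thesis by (rule I3) (use True F3 in simp_all)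
        next
          case F4: False
          show ?thesis
          proof (cases "x \<le> 33/8")
            case True
            show ?thesis by (rule I4) (use True F4 in simp_all)
          next
            case F5: False
            show ?thesis
            proof (cases "x \<le> 19/4")
              case True
              show ?thesis by (rule I5) (use True F5 in simp_all)
            next
              case F6: False
              show ?thesis
              proof (cases "x \<le> 23/4")
                case True
                show ?thesis by (rule I6) (use True F6 in simp_all)
              next
                case F7: False
                show ?thesis
                proof (cases "x \<le> 15/2")
                  case True
                  show ?thesis by (rule I7) (use True F7 in simp_all)
                next
                  case F8: False
                  show ?thesis
                  proof (cases "x \<le> 89/8")
                    case True
                    show ?thesis by (rule I8) (use True F8 in simp_all)
                  next
                    case F9: False
                    show ?thesis
                    proof (cases "x \<le> 21")
                      case True
                      show ?thesis by (rule I9) (use True F9 in simp_all)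
                    next
                      case F10: False
                      show ?thesis by (rule I10) (use F10 in simp)
                    qed
                  qed
                qed
              qed
            qed
          qed
        qed
      qed
    qed
  qed
qed

lemma dtest:
  fixes x c :: real assumes x3: "3 \<le> x"
  and Gpos: "(x*ln x - c)/(x-2) > 0" and L1: "ln x > 1"
  shows "((\<lambda>t. ln ((t*ln t - c)/(t-2)) / ln t) has_real_derivative
     ((inverse ((x*ln x - c)/(x-2)) * (((1 * ln x + inverse x * x - 0) * (x-2) - (x*ln x - c) * (1 - 0))/((x-2)*(x-2)))) * ln x - ln ((x*ln x - c)/(x-2)) * inverse x) / (ln x * ln x)) (at x)"
proof -
  have x0: "0 < x" using x3 by simp
  have h1: "((\<lambda>t. t*ln t - c) has_real_derivative (1 * ln x + inverse x * x - 0)) (at x)"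
    by (intro DERIV_diff DERIV_mult DERIV_ident DERIV_ln[OF x0] DERIV_const)
  have h2: "((\<lambda>t. (t*ln t - c)/(t-2)) has_real_derivative
      (((1 * ln x + inverse x * x - 0) * (x-2) - (x*ln x - c) * (1 - 0))/((x-2)*(x-2)))) (at x)"
    using x3 by (intro DERIV_divide h1 DERIV_diff DERIV_ident DERIV_const) auto
  have h3: "((\<lambda>t. ln ((t*ln t - c)/(t-2))) has_real_derivative
      inverse ((x*ln x - c)/(x-2)) * (((1 * ln x + inverse x * x - 0) * (x-2) - (x*ln x - c) * (1 - 0))/((x-2)*(x-2)))) (at x)"
    by (rule DERIV_chain2[OF DERIV_ln[OF Gpos] h2])
  show ?thesis
    using L1 by (intro DERIV_divide h3 DERIV_ln[OF x0]) auto
qed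

lemma alg1: fixes N D A :: real assumes "N>0" "D>0" shows "inverse (N/D) * (A/(D*D)) = A/(N*D)"
  using assms by (simp add: field_simps)
lemma alg2: fixes N D A x L :: real assumes "x>0" "N>0" "D>0" shows "A/(N*D)*L = x*L*A/(x*N*D)"
  using assms by (simp add: field_simps)
lemma alg3: fixes N D G x :: real assumes "x>0" "N>0" "D>0" shows "G*inverse x = N*D*G/(x*N*D)"
  using assms by (simp add: field_simps)

lemma deriv_neg:
  fixes x :: real assumes x3: "3 \<le> x"
  shows "\<exists>Y. ((\<lambda>t. ln ((t*ln t - ln 4)/(t-2)) / ln t) has_real_derivative Y) (at x) \<and> Y < 0"
proof -
  define L where "L = ln x"
  define c where "c = ln (4::real)"
  define N where "N = x*L - c"
  define D where "D = x - 2"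
  have x0: "x > 0" using x3 by simp
  have "109/100 \<le> L" unfolding L_def by (rule ln_lb_gen[of 3 1 "3/2"]) (use x3 in \<open>simp_all add: eval_nat_numeral\<close>)
  hence L1: "L > 1" by simp
  have cC: "c \<le> 7/5" unfolding c_def by (rule ln4_le)
  have Dpos: "D > 0" unfolding D_def using x3 by simp
  have "3*1 \<le> x*L" using x3 L1 by (intro mult_mono) auto
  hence Npos: "N > 0" unfolding N_def using cC by simp
  have Gpos: "N/D > 0" using Npos Dpos by simp
  define Y where "Y = ((inverse ((x*ln x - ln 4)/(x-2)) * (((1 * ln x + inverse x * x - 0) * (x-2) - (x*ln x - ln 4) * (1 - 0))/((x-2)*(x-2)))) * ln x - ln ((x*ln x - ln 4)/(x-2)) * inverse x) / (ln x * ln x)"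
  have "((\<lambda>t. ln ((t*ln t - ln 4)/(t-2)) / ln t) has_real_derivative Y) (at x)"
    unfolding Y_def using x3 Gpos[unfolded N_def D_def L_def c_def] L1[unfolded L_def]
    by (rule dtest)
  moreover have "Y < 0"
  proof -
    have core': "x*L*(x-2*L-2+c) < N*D*ln (N/D)"
      using core[OF x3] unfolding N_def D_def L_def c_def by simp
    have xND: "x*N*D > 0" using Npos Dpos x3 by simp
    have A: "(1 * L + inverse x * x - 0) * D - N * (1 - 0) = x-2*L-2+c"
      unfolding D_def N_def using x0 by (simp add: algebra_simps)
    have "x*L*(x-2*L-2+c)/(x*N*D) < N*D*ln (N/D)/(x*N*D)"
      using core' xND by (rule divide_strict_right_mono)
    hence "inverse (N/D) * (((1 * L + inverse x * x - 0) * D - N * (1 - 0))/(D*D)) * L - ln (N/D) * inverse x < 0"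
      unfolding A alg1[OF Npos Dpos] alg2[OF x0 Npos Dpos] alg3[OF x0 Npos Dpos]
      by linarith
    moreover have "L*L > 0" using L1 by simp
    ultimately show ?thesis unfolding Y_def L_def[symmetric] c_def[symmetric] D_def[symmetric] N_def[symmetric]
      by (simp add: divide_neg_pos)
  qed
  ultimately show ?thesis by blast
qed

theorem lemma8p2:
  shows "strict_mono_on {1..} seq8"
proof (rule strict_mono_onI)
  fix m n :: nat assume m: "m \<in> {1..}" and n: "n \<in> {1..}" and mn: "m < n"
  let ?F = "\<lambda>t::real. ln ((t*ln t - ln 4)/(t-2)) / ln t"
  have s: "seq8 k = 1 - ?F (real k + 2)" for k unfolding seq8_def by simp
  have "?F (real m + 2) > ?F (real n + 2)"
  proof (rule DERIV_neg_imp_decreasing[of _ _ ?F])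
    show "real m + 2 < real n + 2" using mn by simp
    fix x assume "real m + 2 \<le> x" "x \<le> real n + 2"
    hence "3 \<le> x" using m by auto
    thus "\<exists>y. (?F has_real_derivative y) (at x) \<and> y < 0" by (rule deriv_neg)
  qed
  thus "seq8 m < seq8 n" unfolding s by simp
qed
end
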